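(* Let $A$ be an associative commutative algebra with unit over a field $K$ of characteristic different from $2$ and $3$, let $\partial\in\operatorname{Der}(A)$, and suppose that $a\partial\ne0$ for every nonzero $a\in A$. Let $A\partial=\{a\partial : a\in A\}$, a Lie algebra of derivations with $[a\partial,b\partial]=(a\partial(b)-b\partial(a))\partial$. For $\chi\in A^*$ define $\Phi(\chi):A\partial\times A\partial\to K$ by $\Phi(\chi)(a\partial,b\partial)=\chi(ab)$. Then each $\Phi(\chi)$ is a commutative $2$-cocycle on $A\partial$, and $\chi\mapsto\Phi(\chi)$ is an injective linear map $A^*\to Z^2_{comm}(A\partial)$.
   Context: $Z^2_{comm}(L)$ is the space of symmetric bilinear forms $\varphi:L\times L\to K$ with $\varphi([x,y],z)+\varphi([z,x],y)+\varphi([y,z],x)=0$ for all $x,y,z\in L$. *)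

theory Defs
  imports Complex_Main
begin

definition mulder :: "('a::comm_ring_1 \<Rightarrow> 'a) \<Rightarrow> 'a \<Rightarrow> ('a \<Rightarrow> 'a)" where
  "mulder D a = (\<lambda>x. a * D x)"

definition Ader :: "('a::comm_ring_1 \<Rightarrow> 'a) \<Rightarrow> ('a \<Rightarrow> 'a) set" where
  "Ader D = range (mulder D)"

definition dbracket :: "('a::ab_group_add \<Rightarrow> 'a) \<Rightarrow> ('a \<Rightarrow> 'a) \<Rightarrow> ('a \<Rightarrow> 'a)" where
  "dbracket u v = (\<lambda>x. u (v x) - v (u x))"

definition Z2comm :: "('k::field \<Rightarrow> 'a::ab_group_add \<Rightarrow> 'a) \<Rightarrow> ('a \<Rightarrow> 'a) set
    \<Rightarrow> (('a \<Rightarrow> 'a) \<Rightarrow> ('a \<Rightarrow> 'a) \<Rightarrow> 'k) set" where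
  "Z2comm scale L = {\<phi>.
     (\<forall>u\<in>L. \<forall>v\<in>L. \<phi> u v = \<phi> v u) \<and>
     (\<forall>u\<in>L. \<forall>v\<in>L. \<forall>w\<in>L. \<forall>c.
        \<phi> (\<lambda>x. u x + v x) w = \<phi> u w + \<phi> v w \<and>
        \<phi> (\<lambda>x. scale c (u x)) w = c * \<phi> u w) \<and>
     (\<forall>x\<in>L. \<forall>y\<in>L. \<forall>z\<in>L.
        \<phi> (dbracket x y) z + \<phi> (dbracket z x) y + \<phi> (dbracket y z) x = 0)}"

text \<open>\<Phi>(\<chi>)(a\<partial>, b\<partial>) = \<chi>(ab), using the (unique) representation of an element of A\<partial>.\<close>
definition Phi :: "('a::comm_ring_1 \<Rightarrow> 'a) \<Rightarrow> ('a \<Rightarrow> 'k::field)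
    \<Rightarrow> ('a \<Rightarrow> 'a) \<Rightarrow> ('a \<Rightarrow> 'a) \<Rightarrow> 'k" where
  "Phi D \<chi> u v = \<chi> ((THE a. u = mulder D a) * (THE b. v = mulder D b))"

end

theory Submission
  imports Defs
begin


lemma mulder_inj:
  assumes nondeg: "\<And>a. a \<noteq> 0 \<Longrightarrow> mulder D a \<noteq> (\<lambda>x. 0)"
  shows "mulder D a = mulder D b \<Longrightarrow> a = b"
proof (rule ccontr)
  assume h: "mulder D a = mulder D b" "a \<noteq> b"
  have "mulder D (a - b) = (\<lambda>x. 0)"
  proof
    fix x
    have "a * D x = b * D x" using fun_cong[OF h(1), of x] by (simp add: mulder_def)
    thus "mulder D (a - b) x = 0" by (simp add: mulder_def algebra_simps)
  qed
  with nondeg[of "a - b"] h(2) show False by simp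
qed

lemma the_mulder:
  assumes nondeg: "\<And>a. a \<noteq> 0 \<Longrightarrow> mulder D a \<noteq> (\<lambda>x. 0)"
  shows "(THE b. mulder D a = mulder D b) = a"
  using mulder_inj[OF nondeg] by (rule_tac the_equality) auto

lemma Phi_mulder:
  assumes nondeg: "\<And>a. a \<noteq> 0 \<Longrightarrow> mulder D a \<noteq> (\<lambda>x. 0)"
  shows "Phi D \<chi> (mulder D a) (mulder D b) = \<chi> (a * b)"
  unfolding Phi_def using the_mulder[OF nondeg] by simp

theorem lemma2p4:
  fixes scale :: "'k::field \<Rightarrow> 'a::comm_ring_1 \<Rightarrow> 'a" and D :: "'a \<Rightarrow> 'a"
  assumes alg: "vector_space scale"
    and alg_mult: "\<And>c a b. scale c (a * b) = scale c a * b"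
    and char2: "(2::'k) \<noteq> 0" and char3: "(3::'k) \<noteq> 0"
    and D_lin: "Vector_Spaces.linear scale scale D"
    and D_leibniz: "\<And>a b. D (a * b) = D a * b + a * D b"
    and nondeg: "\<And>a. a \<noteq> 0 \<Longrightarrow> mulder D a \<noteq> (\<lambda>x. 0)"
  shows "(\<forall>\<chi>. Vector_Spaces.linear scale (*) \<chi> \<longrightarrow> Phi D \<chi> \<in> Z2comm scale (Ader D))
    \<and> (\<forall>\<chi>1 \<chi>2. Vector_Spaces.linear scale (*) \<chi>1 \<longrightarrow> Vector_Spaces.linear scale (*) \<chi>2 \<longrightarrow>
         (\<forall>u\<in>Ader D. \<forall>v\<in>Ader D.
            Phi D (\<lambda>x. \<chi>1 x + \<chi>2 x) u v = Phi D \<chi>1 u v + Phi D \<chi>2 u v))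
    \<and> (\<forall>\<chi> c. Vector_Spaces.linear scale (*) \<chi> \<longrightarrow>
         (\<forall>u\<in>Ader D. \<forall>v\<in>Ader D. Phi D (\<lambda>x. c * \<chi> x) u v = c * Phi D \<chi> u v))
    \<and> (\<forall>\<chi>1 \<chi>2. Vector_Spaces.linear scale (*) \<chi>1 \<longrightarrow> Vector_Spaces.linear scale (*) \<chi>2 \<longrightarrow>
         (\<forall>u\<in>Ader D. \<forall>v\<in>Ader D. Phi D \<chi>1 u v = Phi D \<chi>2 u v) \<longrightarrow> \<chi>1 = \<chi>2)"
proof -
  have PM: "\<And>\<chi> a b. Phi D \<chi> (mulder D a) (mulder D b) = \<chi> (a * b)"
    using Phi_mulder[OF nondeg] by blast
  have lin: "\<And>\<chi> x y. Vector_Spaces.linear scale (*) \<chi> \<Longrightarrow> \<chi> (x + y) = \<chi> x + \<chi> y"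
    by (simp add: Vector_Spaces.linear_iff)
  have lins: "\<And>\<chi> c x. Vector_Spaces.linear scale (*) \<chi> \<Longrightarrow> \<chi> (scale c x) = c * \<chi> x"
    by (simp add: Vector_Spaces.linear_iff)
  have lin0: "\<And>\<chi>. Vector_Spaces.linear scale (*) \<chi> \<Longrightarrow> \<chi> 0 = 0"
  proof -
    fix \<chi> :: "'a \<Rightarrow> 'k" assume l: "Vector_Spaces.linear scale (*) \<chi>"
    have "\<chi> (0 + 0) = \<chi> 0 + \<chi> 0" by (rule lin[OF l])
    thus "\<chi> 0 = 0" by (metis add_cancel_right_right add_0)
  qed
  have add_m: "\<And>a b. (\<lambda>x. mulder D a x + mulder D b x) = mulder D (a + b)"
    by (simp add: mulder_def algebra_simps)
  have scale_m: "\<And>c a. (\<lambda>x. scale c (mulder D a x)) = mulder D (scale c a)"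
  proof -
    fix c a
    have "\<And>x. scale c (a * D x) = scale c a * D x" by (rule alg_mult)
    thus "(\<lambda>x. scale c (mulder D a x)) = mulder D (scale c a)" by (simp add: mulder_def)
  qed
  have br: "\<And>a b. dbracket (mulder D a) (mulder D b) = mulder D (a * D b - b * D a)"
    by (simp add: dbracket_def mulder_def D_leibniz algebra_simps)
  have part1: "\<And>\<chi>. Vector_Spaces.linear scale (*) \<chi> \<Longrightarrow> Phi D \<chi> \<in> Z2comm scale (Ader D)"
  proof -
    fix \<chi> :: "'a \<Rightarrow> 'k" assume l: "Vector_Spaces.linear scale (*) \<chi>"
    show "Phi D \<chi> \<in> Z2comm scale (Ader D)"
      unfolding Z2comm_def Ader_def
    proof (intro CollectI conjI ballI allI)
      fix u v assume "u \<in> range (mulder D)" "v \<in> range (mulder D)"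
      then obtain a b where "u = mulder D a" "v = mulder D b" by blast
      thus "Phi D \<chi> u v = Phi D \<chi> v u" by (simp add: PM mult.commute)
    next
      fix u v w c assume "u \<in> range (mulder D)" "v \<in> range (mulder D)" "w \<in> range (mulder D)"
      then obtain a b e where abe: "u = mulder D a" "v = mulder D b" "w = mulder D e" by blast
      show "Phi D \<chi> (\<lambda>x. u x + v x) w = Phi D \<chi> u w + Phi D \<chi> v w"
        by (simp add: abe add_m PM distrib_right lin[OF l])
      show "Phi D \<chi> (\<lambda>x. scale c (u x)) w = c * Phi D \<chi> u w"
        by (simp add: abe scale_m PM alg_mult[symmetric] lins[OF l])
    next
      fix u v w assume "u \<in> range (mulder D)" "v \<in> range (mulder D)" "w \<in> range (mulder D)"
      then obtain a b e where abe: "u = mulder D a" "v = mulder D b" "w = mulder D e" by blast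
      have "(a * D b - b * D a) * e + (e * D a - a * D e) * b + (b * D e - e * D b) * a = 0"
        by (simp add: algebra_simps)
      hence "\<chi> ((a * D b - b * D a) * e) + \<chi> ((e * D a - a * D e) * b) + \<chi> ((b * D e - e * D b) * a) = 0"
        by (metis lin[OF l] lin0[OF l])
      thus "Phi D \<chi> (dbracket u v) w + Phi D \<chi> (dbracket w u) v + Phi D \<chi> (dbracket v w) u = 0"
        by (simp add: abe br PM)
    qed
  qed
  show ?thesis
  proof (intro conjI allI impI ballI)
    fix \<chi> :: "'a \<Rightarrow> 'k" assume "Vector_Spaces.linear scale (*) \<chi>"
    thus "Phi D \<chi> \<in> Z2comm scale (Ader D)" by (rule part1)
  next
    fix \<chi>1 \<chi>2 :: "'a \<Rightarrow> 'k" and u v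
    show "Phi D (\<lambda>x. \<chi>1 x + \<chi>2 x) u v = Phi D \<chi>1 u v + Phi D \<chi>2 u v"
      by (simp add: Phi_def)
  next
    fix \<chi> :: "'a \<Rightarrow> 'k" and c u v
    show "Phi D (\<lambda>x. c * \<chi> x) u v = c * Phi D \<chi> u v"
      by (simp add: Phi_def)
  next
    fix \<chi>1 \<chi>2 :: "'a \<Rightarrow> 'k"
    assume h: "\<forall>u\<in>Ader D. \<forall>v\<in>Ader D. Phi D \<chi>1 u v = Phi D \<chi>2 u v"
    show "\<chi>1 = \<chi>2"
    proof
      fix x
      have "Phi D \<chi>1 (mulder D 1) (mulder D x) = Phi D \<chi>2 (mulder D 1) (mulder D x)"
        using h by (simp add: Ader_def)
      thus "\<chi>1 x = \<chi>2 x" by (simp add: PM)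
    qed
  qed
qed

end
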